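(* Let $A>0$, $C>0$, $m>0$, $g>0$, $z>0$ and $\mathfrak{M}_3\in\mathbb{R}$. Consider the differential system on $\mathbb{R}^6$ (heavy symmetric top) $$\dot{\vec M}=\vec M\times \mathbb{I}^{-1}\vec M+mg\,\vec\gamma\times\vec r_G,\qquad \dot{\vec\gamma}=\vec\gamma\times\mathbb{I}^{-1}\vec M,$$ where $\vec M=(M_1,M_2,M_3)$, $\vec\gamma=(\gamma_1,\gamma_2,\gamma_3)$, $\mathbb{I}=\mathrm{diag}(A,A,C)$, $\vec r_G=(0,0,z)$ and $\times$ is the cross product in $\mathbb{R}^3$. The point $x_e=(0,0,\mathfrak{M}_3,0,0,1)$ is an equilibrium of this system, and the functions $$H=\tfrac12\Big(\tfrac{M_1^2}{A}+\tfrac{M_2^2}{A}+\tfrac{M_3^2}{C}\Big)+mgz\gamma_3,\quad C_1=\gamma_1^2+\gamma_2^2+\gamma_3^2,\quad C_2=M_1\gamma_1+M_2\gamma_2+M_3\gamma_3,\quad F=M_3$$ are conserved quantities. Then $x_e$ is stable with respect to the set of conserved quantities $\{H,C_1,C_2,F\}$ if and only if $\mathfrak{M}_3^2\geq 4Amgz$.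
   Context: Definition: an equilibrium point $x_e$ of a differential equation $\dot x=f(x)$ on an open set $D\subset\mathbb{R}^n$ is called stable with respect to a set of conserved quantities $\{F_1,\dots,F_k\}$ if there exists a continuous function $\Phi:\mathbb{R}^k\to\mathbb{R}$ such that the function $x\mapsto \Phi(F_1(x),\dots,F_k(x))-\Phi(F_1(x_e),\dots,F_k(x_e))$ is positive definite at $x_e$, i.e. it vanishes at $x_e$ and is strictly positive at every $x\neq x_e$ in some neighborhood of $x_e$. *)

theory Defs
  imports "HOL-Analysis.Analysis"
begin

definition stable_wrt :: "(real^'n \<Rightarrow> real^'n) \<Rightarrow> real^'n \<Rightarrow> (real^'n \<Rightarrow> real^'k) \<Rightarrow> bool" where
  "stable_wrt f xe F \<longleftrightarrow> f xe = 0 \<and>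
     (\<exists>\<Phi> :: real^'k \<Rightarrow> real. continuous_on UNIV \<Phi> \<and>
        (\<exists>e>0. \<forall>x. x \<noteq> xe \<and> dist x xe < e \<longrightarrow> \<Phi> (F x) - \<Phi> (F xe) > 0))"

text \<open>Heavy symmetric top; state x = (M1,M2,M3,g1,g2,g3), I = diag(A,A,C), r_G = (0,0,z).
  dM = M x I^{-1}M + m g (gamma x r_G),  dgamma = gamma x I^{-1}M.\<close>
definition top_field :: "real \<Rightarrow> real \<Rightarrow> real \<Rightarrow> real \<Rightarrow> real \<Rightarrow> real^6 \<Rightarrow> real^6" where
  "top_field A C m g z x =
     (let M1 = x$1; M2 = x$2; M3 = x$3; g1 = x$4; g2 = x$5; g3 = x$6;
          W1 = M1 / A; W2 = M2 / A; W3 = M3 / C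
      in vector [ M2 * W3 - M3 * W2 + m * g * (g2 * z - g3 * 0),
                  M3 * W1 - M1 * W3 + m * g * (g3 * 0 - g1 * z),
                  M1 * W2 - M2 * W1 + m * g * (g1 * 0 - g2 * 0),
                  g2 * W3 - g3 * W2,
                  g3 * W1 - g1 * W3,
                  g1 * W2 - g2 * W1 ])"

definition top_H :: "real \<Rightarrow> real \<Rightarrow> real \<Rightarrow> real \<Rightarrow> real \<Rightarrow> real^6 \<Rightarrow> real" where
  "top_H A C m g z x = (1/2) * ((x$1)^2 / A + (x$2)^2 / A + (x$3)^2 / C) + m * g * z * x$6"

definition top_C1 :: "real^6 \<Rightarrow> real" where
  "top_C1 x = (x$4)^2 + (x$5)^2 + (x$6)^2"

definition top_C2 :: "real^6 \<Rightarrow> real" where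
  "top_C2 x = x$1 * x$4 + x$2 * x$5 + x$3 * x$6"

definition top_F :: "real^6 \<Rightarrow> real" where
  "top_F x = x$3"

definition top_conserved :: "real \<Rightarrow> real \<Rightarrow> real \<Rightarrow> real \<Rightarrow> real \<Rightarrow> real^6 \<Rightarrow> real^4" where
  "top_conserved A C m g z x = vector [top_H A C m g z x, top_C1 x, top_C2 x, top_F x]"

end

theory Submission imports Defs begin
lemma vector_6 [simp]:
 "(vector [a,b,c,d,e,f] ::('a::zero)^6)$1 = a"
 "(vector [a,b,c,d,e,f] ::('a::zero)^6)$2 = b"
 "(vector [a,b,c,d,e,f] ::('a::zero)^6)$3 = c"
 "(vector [a,b,c,d,e,f] ::('a::zero)^6)$4 = d"
 "(vector [a,b,c,d,e,f] ::('a::zero)^6)$5 = e"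
 "(vector [a,b,c,d,e,f] ::('a::zero)^6)$6 = f"
  unfolding vector_def by simp_all
lemma vector_4' [simp]:
 "(vector [a,b,c,d] ::('a::zero)^4)$1 = a"
 "(vector [a,b,c,d] ::('a::zero)^4)$2 = b"
 "(vector [a,b,c,d] ::('a::zero)^4)$3 = c"
 "(vector [a,b,c,d] ::('a::zero)^4)$4 = d"
  unfolding vector_def by simp_all
lemma exhaust_6:
  fixes x :: 6
  shows "x = 1 \<or> x = 2 \<or> x = 3 \<or> x = 4 \<or> x = 5 \<or> x = 6"
proof (induct x)
  case (of_int z)
  then have "z = 0 \<or> z = 1 \<or> z = 2 \<or> z = 3 \<or> z = 4 \<or> z = 5" by fastforce
  then show ?case by auto
qed
lemma forall_6: "(\<forall>i::6. P i) \<longleftrightarrow> P 1 \<and> P 2 \<and> P 3 \<and> P 4 \<and> P 5 \<and> P 6"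
  by (metis exhaust_6)
lemma UNIV_6: "UNIV = {1, 2, 3, 4, 5, 6::6}"
  using exhaust_6 by auto
lemma sum_6: "sum f (UNIV::6 set) = f 1 + f 2 + f 3 + f 4 + f 5 + f 6"
  unfolding UNIV_6 by (simp add: ac_simps)

lemma stable_iff:
  "stable_wrt f xe F \<longleftrightarrow> f xe = 0 \<and> (\<exists>e>0. \<forall>x. x \<noteq> xe \<and> dist x xe < e \<longrightarrow> F x \<noteq> F xe)"
proof
  assume "stable_wrt f xe F"
  then show "f xe = 0 \<and> (\<exists>e>0. \<forall>x. x \<noteq> xe \<and> dist x xe < e \<longrightarrow> F x \<noteq> F xe)"
    unfolding stable_wrt_def by (metis less_irrefl diff_self)
next
  assume a: "f xe = 0 \<and> (\<exists>e>0. \<forall>x. x \<noteq> xe \<and> dist x xe < e \<longrightarrow> F x \<noteq> F xe)"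
  let ?P = "\<lambda>y. (norm (y - F xe))^2"
  have "continuous_on UNIV ?P" by (intro continuous_intros)
  moreover have "\<exists>e>0. \<forall>x. x \<noteq> xe \<and> dist x xe < e \<longrightarrow> ?P (F x) - ?P (F xe) > 0"
    using a by force
  ultimately show "stable_wrt f xe F" unfolding stable_wrt_def using a by blast
qed

lemma conserved_eq:
  "top_conserved A C m g z x = top_conserved A C m g z y \<longleftrightarrow>
    top_H A C m g z x = top_H A C m g z y \<and> top_C1 x = top_C1 y \<and> top_C2 x = top_C2 y \<and> top_F x = top_F y"
  unfolding top_conserved_def vec_eq_iff forall_4 by simp

theorem mainTheorem2:
  fixes A C m g z M3 :: real
  assumes "A > 0" and "C > 0" and "m > 0" and "g > 0" and "z > 0"
  shows "stable_wrt (top_field A C m g z) (vector [0, 0, M3, 0, 0, 1])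
           (top_conserved A C m g z)
         \<longleftrightarrow> M3^2 \<ge> 4 * A * m * g * z"
proof -
  define xe :: "real^6" where "xe = vector [0, 0, M3, 0, 0, 1]"
  define K where "K = 2 * A * m * g * z"
  have Kpos: "K > 0" unfolding K_def using assms by simp
  have eq0: "top_field A C m g z xe = 0"
    unfolding top_field_def xe_def Let_def vec_eq_iff forall_6 by simp
  have lvl: "top_conserved A C m g z x = top_conserved A C m g z xe \<longleftrightarrow>
     (x$1^2 + x$2^2)/(2*A) + x$3^2/(2*C) + m*g*z*x$6 = M3^2/(2*C) + m*g*z \<and>
     x$4^2 + x$5^2 + x$6^2 = 1 \<and> x$1*x$4 + x$2*x$5 + x$3*x$6 = M3 \<and> x$3 = M3" for x
    unfolding conserved_eq top_H_def top_C1_def top_C2_def top_F_def xe_def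
    by (simp add: add_divide_distrib mult.commute)
  show ?thesis
    unfolding xe_def[symmetric] stable_iff
  proof
    assume "top_field A C m g z xe = 0 \<and> (\<exists>e>0. \<forall>x. x \<noteq> xe \<and> dist x xe < e \<longrightarrow>
        top_conserved A C m g z x \<noteq> top_conserved A C m g z xe)"
    then obtain e where e: "e > 0" and he: "\<And>x. x \<noteq> xe \<Longrightarrow> dist x xe < e \<Longrightarrow>
        top_conserved A C m g z x \<noteq> top_conserved A C m g z xe" by blast
    show "M3^2 \<ge> 4 * A * m * g * z"
    proof (rule ccontr)
      assume "\<not> ?thesis"
      then have lt: "M3^2 < 2*K" unfolding K_def by simp
      define c where "c = \<bar>M3\<bar> + sqrt (2*K) + 4"
      have cpos: "c > 0" unfolding c_def using Kpos by (smt (verit) abs_ge_zero real_sqrt_ge_zero)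
      define t where "t = min 1 (min (e/(2*c)) ((2*K - M3^2)/(M3^2+1)))"
      have p1: "M3^2+1 > 0" by (smt (verit) zero_le_power2)
      have q0: "(2*K - M3^2)/(M3^2+1) > 0"
        by (rule divide_pos_pos) (use lt in \<open>auto intro: add_nonneg_pos\<close>)
      have t0: "t > 0" unfolding t_def using e cpos q0 by simp
      have t1: "t \<le> 1" unfolding t_def by simp
      have tt: "t^2 \<le> t"
      proof -
        have "t*t \<le> t*1" using t0 t1 by (intro mult_left_mono) auto
        then show ?thesis by (simp add: power2_eq_square)
      qed
      have t2: "t \<le> e/(2*c)" unfolding t_def by simp
      have t3: "t \<le> (2*K - M3^2)/(M3^2+1)" unfolding t_def by simp
      have "t * M3^2 \<le> 2*K - M3^2"
      proof -
        have "t * (M3^2+1) \<le> 2*K - M3^2" using t3 pos_le_divide_eq[of "M3^2+1" t "2*K-M3^2"] p1 by simp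
        moreover have "t * M3^2 \<le> t * (M3^2+1)" using t0 by simp
        ultimately show ?thesis by linarith
      qed
      moreover have "t^2 * M3^2 \<le> t * M3^2"
        using tt by (rule mult_right_mono) simp
      ultimately have mk: "M3^2 * (1+t^2) \<le> 2*K" by (simp add: algebra_simps)
      have d: "1 + t^2 > 0" by (smt (verit) zero_le_power2)
      have "M3^2 \<le> 2*K/(1+t^2)" by (subst pos_le_divide_eq[OF d]) (rule mk)
      then have snn: "2*K/(1+t^2) - M3^2 \<ge> 0" by simp
      define s where "s = sqrt (2*K/(1+t^2) - M3^2)"
      have s2: "s^2 = 2*K/(1+t^2) - M3^2" unfolding s_def by (rule real_sqrt_pow2[OF snn])
      have s0: "s \<ge> 0" unfolding s_def by (rule real_sqrt_ge_zero[OF snn])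
      have sle: "s \<le> sqrt (2*K)" unfolding s_def
      proof (rule real_sqrt_le_mono)
        have "2*K/(1+t^2) \<le> 2*K" using Kpos d by (simp add: divide_le_eq)
        then show "2*K/(1+t^2) - M3^2 \<le> 2*K" by (smt (verit) zero_le_power2)
      qed
      define x :: "real^6" where
        "x = vector [(M3*t), (t * s), M3, (2*t/(1+t^2)), 0, ((1-t^2)/(1+t^2))]"
      have "x \<noteq> xe"
      proof
        assume "x = xe"
        then have "x$4 = xe$4" by simp
        then show False unfolding x_def xe_def using t0 d by simp
      qed
      moreover have "dist x xe < e"
      proof -
        have "dist x xe \<le> (\<Sum>i\<in>UNIV. \<bar>(x - xe)$i\<bar>)"
          unfolding dist_norm by (rule norm_le_l1_cart)
        also have "\<dots> = \<bar>M3*t\<bar> + \<bar>t * s\<bar> + \<bar>2*t/(1+t^2)\<bar> + \<bar>(1-t^2)/(1+t^2) - 1\<bar>"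
          unfolding sum_6 x_def xe_def by simp
        also have "\<dots> \<le> \<bar>M3\<bar>*t + t * sqrt(2*K) + 2*t + 2*t"
        proof -
          have a1: "\<bar>M3*t\<bar> = \<bar>M3\<bar>*t" using t0 by (simp add: abs_mult)
          have a2: "\<bar>t * s\<bar> \<le> t * sqrt(2*K)" using t0 s0 sle by (simp add: abs_mult)
          have a3: "\<bar>2*t/(1+t^2)\<bar> \<le> 2*t" using t0 d
            by (simp add: divide_le_eq)
          have "(1-t^2)/(1+t^2) - 1 = -(2*t^2)/(1+t^2)" using d by (simp add: field_simps)
          then have a4: "\<bar>(1-t^2)/(1+t^2) - 1\<bar> = 2*t^2/(1+t^2)" using d by simp
          have "2*t^2/(1+t^2) \<le> 2*t^2" using d by (simp add: divide_le_eq)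
            (smt (verit) mult_le_cancel_left1 zero_le_power2)
          moreover have "2*t^2 \<le> 2*t" using tt by simp
          ultimately show ?thesis using a1 a2 a3 a4 by linarith
        qed
        also have "\<dots> = t * c" unfolding c_def by (simp add: algebra_simps)
        also have "\<dots> \<le> e/2" using t2 cpos by (simp add: le_divide_eq algebra_simps)
        also have "\<dots> < e" using e by simp
        finally show ?thesis .
      qed
      moreover have "top_conserved A C m g z x = top_conserved A C m g z xe"
        unfolding lvl
      proof (intro conjI)
        have "(x$1^2 + x$2^2) = t^2 * (M3^2 + s^2)"
          unfolding x_def by (simp add: power_mult_distrib algebra_simps)
        also have "\<dots> = t^2 * (2*K/(1+t^2))" using s2 by simp
        finally have "(x$1^2 + x$2^2)/(2*A) = 2*m*g*z*t^2/(1+t^2)"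
          unfolding K_def using assms d by (simp add: field_simps)
        moreover have "m*g*z*x$6 = m*g*z - 2*m*g*z*t^2/(1+t^2)"
          unfolding x_def using d by (simp add: field_simps)
        moreover have "x$3 = M3" unfolding x_def by simp
        ultimately show "(x$1^2 + x$2^2)/(2*A) + x$3^2/(2*C) + m*g*z*x$6 = M3^2/(2*C) + m*g*z"
          by simp
        have e1: "4*t^2 + (1-t^2)^2 = (1+t^2)^2" by (simp add: algebra_simps power2_eq_square)
        have "x$4^2 + x$5^2 + x$6^2 = (2*t)^2/(1+t^2)^2 + (1-t^2)^2/(1+t^2)^2"
          unfolding x_def by (simp add: power_divide)
        also have "\<dots> = (4*t^2 + (1-t^2)^2)/(1+t^2)^2" by (simp add: add_divide_distrib power_mult_distrib)
        also have "\<dots> = 1" unfolding e1 using d by simp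
        finally show "x$4^2 + x$5^2 + x$6^2 = 1" .
        have "x$1*x$4 + x$2*x$5 + x$3*x$6 = (M3*(2*t^2))/(1+t^2) + (M3*(1-t^2))/(1+t^2)"
          unfolding x_def by (simp add: power2_eq_square)
        also have "\<dots> = M3*(2*t^2 + (1-t^2))/(1+t^2)" by (simp only: distrib_left add_divide_distrib)
        also have "\<dots> = M3*(1+t^2)/(1+t^2)" by (simp add: add.commute)
        also have "\<dots> = M3" using d by simp
        finally show "x$1*x$4 + x$2*x$5 + x$3*x$6 = M3" .
        show "x$3 = M3" unfolding x_def by simp
      qed
      ultimately show False using he by blast
    qed
  next
    assume ge: "M3^2 \<ge> 4 * A * m * g * z"
    have "\<forall>x. x \<noteq> xe \<and> dist x xe < 1 \<longrightarrow>
        top_conserved A C m g z x \<noteq> top_conserved A C m g z xe"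
    proof (intro allI impI notI)
      fix x :: "real^6"
      assume h: "x \<noteq> xe \<and> dist x xe < 1"
      assume "top_conserved A C m g z x = top_conserved A C m g z xe"
      then have H: "(x$1^2 + x$2^2)/(2*A) + x$3^2/(2*C) + m*g*z*x$6 = M3^2/(2*C) + m*g*z"
        and C1: "x$4^2 + x$5^2 + x$6^2 = 1" and C2: "x$1*x$4 + x$2*x$5 + x$3*x$6 = M3"
        and F: "x$3 = M3" unfolding lvl by auto
      define u where "u = 1 - x$6"
      have P: "x$1^2 + x$2^2 = K * u"
      proof -
        have "(x$1^2 + x$2^2)/(2*A) = m*g*z*u" using H F unfolding u_def by (simp add: algebra_simps)
        then show ?thesis unfolding K_def using assms by (simp add: field_simps)
      qed
      have Q: "x$1*x$4 + x$2*x$5 = M3 * u" using C2 F unfolding u_def by (simp add: algebra_simps)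
      have R: "x$4^2 + x$5^2 = u * (1 + x$6)" using C1 unfolding u_def
        by (simp add: algebra_simps power2_eq_square)
      have CS: "(x$1*x$4 + x$2*x$5)^2 \<le> (x$1^2 + x$2^2) * (x$4^2 + x$5^2)"
      proof -
        have "0 \<le> (x$1*x$5 - x$2*x$4)^2" by simp
        then show ?thesis by (simp add: algebra_simps power2_eq_square)
      qed
      have x6: "x$6 \<le> 1"
      proof -
        have "x$6^2 \<le> 1" using C1 by (smt (verit) zero_le_power2)
        then show ?thesis using abs_square_le_1 by (metis abs_le_D1)
      qed
      have u0: "u = 0"
      proof (rule ccontr)
        assume "u \<noteq> 0"
        then have up: "u > 0" using x6 unfolding u_def by simp
        have "M3^2 * u^2 \<le> K * u * (u * (1 + x$6))" using CS P Q R by (simp add: power_mult_distrib)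
        then have "M3^2 * u^2 \<le> (K * (1 + x$6)) * u^2" by (simp add: algebra_simps power2_eq_square)
        then have "M3^2 \<le> K * (1 + x$6)" using up by simp
        moreover have "K * (1 + x$6) < K * 2" using Kpos up unfolding u_def by simp
        ultimately show False using ge unfolding K_def by simp
      qed
      then have "x$4^2 + x$5^2 = 0" using R by simp
      then have "x$4 = 0" "x$5 = 0" by (simp_all add: add_nonneg_eq_0_iff)
      have "x$1^2 + x$2^2 = 0" using P u0 by simp
      then have "x$1 = 0" "x$2 = 0" by (simp_all add: add_nonneg_eq_0_iff)
      have "x$6 = 1" using u0 unfolding u_def by simp
      have "x = xe" unfolding xe_def vec_eq_iff forall_6
        using \<open>x$1 = 0\<close> \<open>x$2 = 0\<close> F \<open>x$4 = 0\<close> \<open>x$5 = 0\<close> \<open>x$6 = 1\<close> by simp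
      then show False using h by simp
    qed
    then show "top_field A C m g z xe = 0 \<and> (\<exists>e>0. \<forall>x. x \<noteq> xe \<and> dist x xe < e \<longrightarrow>
        top_conserved A C m g z x \<noteq> top_conserved A C m g z xe)"
      using eq0 by (intro conjI exI[of _ 1]) auto
  qed
qed

end
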